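(* Let $\omega\in\mathcal W$ with associated function $\tau$, and suppose $m\ge1$ is an integer such that $\tau(r)\ge c(1-r)^m$ for some $c>0$ and all $0\le r<1$. Let $\varphi,\psi$ be holomorphic self-maps of $\mathbb D$, $\zeta\in\partial\mathbb D$, and $M\ge1$ an integer such that $\varphi,\psi$ extend $M$ times continuously differentiably to $\overline{\mathbb D}\cap N$ for a neighborhood $N$ of $\zeta$, with $\varphi^{(n)}(\zeta)=\psi^{(n)}(\zeta)$ for $n=0,1,\dots,M$. Suppose moreover that $\varphi$ has order of contact at most $M/m$ at $\zeta$, i.e. there are $c'>0$ and a neighborhood $N'$ of $\zeta$ with $1-|\varphi(z)|\ge c'|\varphi(z)-\varphi(\zeta)|^{M/m}$ for all $z\in\mathbb D\cap N'$. Then $\lim_{z\to\zeta,\,z\in\mathbb D}\rho_\tau(\varphi(z),\psi(z))=0$.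
   Context: $\mathbb D$ is the unit disk. A weight is $\omega=e^{-\eta}$ with $\eta$ a radial $C^2$ function on $\mathbb D$, strictly increasing in $|z|$, $\Delta\eta>0$, $\omega$ integrable. $\omega\in\mathcal W$ if there is a differentiable radial $\tau>0$ with $\tau\asymp(\Delta\eta)^{-1/2}$ and $\tau(r)\to0$, $\tau'(r)\to0$ as $r\to1^-$; such $\tau$ is fixed. $d_\tau(z,w)=\inf_\gamma\int_0^1|\gamma'(t)|/\tau(\gamma(t))\,dt$ over piecewise smooth curves in $\mathbb D$ from $z$ to $w$; $\rho_\tau=1-e^{-d_\tau}$. *)

theory Defs
  imports "HOL-Complex_Analysis.Complex_Analysis"
begin

definition Dx :: "(complex \<Rightarrow> real) \<Rightarrow> complex \<Rightarrow> real" where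
  "Dx f z = deriv (\<lambda>t. f (z + of_real t)) 0"

definition Dy :: "(complex \<Rightarrow> real) \<Rightarrow> complex \<Rightarrow> real" where
  "Dy f z = deriv (\<lambda>t. f (z + \<i> * of_real t)) 0"

definition C1_on :: "complex set \<Rightarrow> (complex \<Rightarrow> real) \<Rightarrow> bool" where
  "C1_on S f \<longleftrightarrow> (\<forall>z\<in>S. f differentiable (at z)) \<and>
      continuous_on S (Dx f) \<and> continuous_on S (Dy f)"

definition C2_on :: "complex set \<Rightarrow> (complex \<Rightarrow> real) \<Rightarrow> bool" where
  "C2_on S f \<longleftrightarrow> C1_on S f \<and> C1_on S (Dx f) \<and> C1_on S (Dy f)"

definition laplacian :: "(complex \<Rightarrow> real) \<Rightarrow> complex \<Rightarrow> real" where
  "laplacian f z = Dx (Dx f) z + Dy (Dy f) z"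

text \<open>The weight \<omega> = exp(-\<eta>) is in the class W with associated radial function
  \<tau>(|z|) (\<tau> given by its radial profile on [0,1)).\<close>
definition in_W :: "(complex \<Rightarrow> real) \<Rightarrow> (real \<Rightarrow> real) \<Rightarrow> bool" where
  "in_W \<eta> \<tau> \<longleftrightarrow>
     C2_on (ball 0 1) \<eta> \<and>
     (\<forall>z\<in>ball 0 1. \<forall>w\<in>ball 0 1. cmod z = cmod w \<longrightarrow> \<eta> z = \<eta> w) \<and>
     (\<forall>z\<in>ball 0 1. \<forall>w\<in>ball 0 1. cmod z < cmod w \<longrightarrow> \<eta> z < \<eta> w) \<and>
     (\<forall>z\<in>ball 0 1. laplacian \<eta> z > 0) \<and>
     (\<lambda>z. exp (- \<eta> z)) integrable_on ball 0 1 \<and>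
     (\<forall>r\<in>{0..<1}. \<tau> r > 0) \<and>
     (\<forall>z\<in>ball 0 1. (\<lambda>z. \<tau> (cmod z)) differentiable (at z)) \<and>
     (\<exists>C1 C2. C1 > 0 \<and> C2 > 0 \<and>
        (\<forall>z\<in>ball 0 1. C1 * (laplacian \<eta> z) powr (-1/2) \<le> \<tau> (cmod z) \<and>
                        \<tau> (cmod z) \<le> C2 * (laplacian \<eta> z) powr (-1/2))) \<and>
     (\<tau> \<longlongrightarrow> 0) (at_left 1) \<and>
     ((deriv \<tau>) \<longlongrightarrow> 0) (at_left 1)"

definition d_tau :: "(real \<Rightarrow> real) \<Rightarrow> complex \<Rightarrow> complex \<Rightarrow> real" where
  "d_tau \<tau> z w = Inf {integral {0..1} (\<lambda>t. cmod (vector_derivative \<gamma> (at t)) / \<tau> (cmod (\<gamma> t))) | \<gamma>.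
       valid_path \<gamma> \<and> path_image \<gamma> \<subseteq> ball 0 1 \<and> pathstart \<gamma> = z \<and> pathfinish \<gamma> = w}"

definition rho_tau :: "(real \<Rightarrow> real) \<Rightarrow> complex \<Rightarrow> complex \<Rightarrow> real" where
  "rho_tau \<tau> z w = 1 - exp (- d_tau \<tau> z w)"

definition CM_ext :: "nat \<Rightarrow> complex set \<Rightarrow> (complex \<Rightarrow> complex) \<Rightarrow> (nat \<Rightarrow> complex \<Rightarrow> complex) \<Rightarrow> bool" where
  "CM_ext M N f F \<longleftrightarrow>
     (\<forall>z\<in>ball 0 1 \<inter> N. F 0 z = f z) \<and>
     (\<forall>n\<le>M. continuous_on (cball 0 1 \<inter> N) (F n)) \<and>
     (\<forall>n<M. \<forall>z\<in>cball 0 1 \<inter> N. (F n has_field_derivative F (Suc n) z) (at z within cball 0 1 \<inter> N))"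

end

theory Submission
  imports Defs
begin


lemma integral_le_const01:
  fixes f :: "real \<Rightarrow> real"
  assumes "\<And>t. t \<in> {0..1} \<Longrightarrow> f t \<le> B" "0 \<le> B"
  shows "integral {0..1} f \<le> B"
proof (cases "f integrable_on {0..1}")
  case True
  have "integral {0..1} f \<le> integral {0..1} (\<lambda>_::real. B)"
    by (rule integral_le) (use True assms in auto)
  also have "\<dots> = B" by simp
  finally show ?thesis .
qed (use assms in \<open>simp add: not_integrable_integral\<close>)

lemma integral_nonneg01:
  fixes f :: "real \<Rightarrow> real"
  assumes "\<And>t. t \<in> {0..1} \<Longrightarrow> 0 \<le> f t"
  shows "0 \<le> integral {0..1} f"
proof (cases "f integrable_on {0..1}")
  case True
  then show ?thesis using integral_nonneg assms by blast
qed (simp add: not_integrable_integral)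

lemma d_tau_bounds:
  fixes \<tau> :: "real \<Rightarrow> real" and a b :: complex
  assumes c: "c > 0" and tau_lower: "\<forall>r\<in>{0..<1}. \<tau> r \<ge> c * (1 - r) ^ m"
    and a: "cmod a < 1" and ab: "cmod (a - b) \<le> (1 - cmod a) / 2"
  shows "0 \<le> d_tau \<tau> a b \<and> d_tau \<tau> a b \<le> cmod (a - b) * 2 ^ m / (c * (1 - cmod a) ^ m)"
proof -
  let ?I = "\<lambda>\<gamma>. integral {0..1} (\<lambda>t. cmod (vector_derivative \<gamma> (at t)) / \<tau> (cmod (\<gamma> t)))"
  let ?S = "{?I \<gamma> | \<gamma>. valid_path \<gamma> \<and> path_image \<gamma> \<subseteq> ball 0 1 \<and> pathstart \<gamma> = a \<and> pathfinish \<gamma> = b}"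
  have taupos: "\<tau> r > 0" if "0 \<le> r" "r < 1" for r
  proof -
    have "c * (1 - r) ^ m > 0" using c that by simp
    with tau_lower that show ?thesis by force
  qed
  have nn: "0 \<le> x" if "x \<in> ?S" for x
  proof -
    from that obtain \<gamma> where g: "x = ?I \<gamma>" "path_image \<gamma> \<subseteq> ball 0 1" by blast
    have "0 \<le> cmod (vector_derivative \<gamma> (at t)) / \<tau> (cmod (\<gamma> t))" if "t \<in> {0..1}" for t
    proof -
      have "\<gamma> t \<in> ball 0 1" using g(2) that unfolding path_image_def by blast
      then show ?thesis using taupos[of "cmod (\<gamma> t)"] by simp
    qed
    then show ?thesis using g(1) integral_nonneg01 by simp
  qed
  have seg: "closed_segment a b \<subseteq> ball 0 1"
  proof -
    have "cmod b < 1"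
    proof -
      have "cmod b \<le> cmod a + cmod (a - b)" by (metis norm_triangle_sub add.commute norm_minus_commute)
      moreover have "cmod a + (1 - cmod a) / 2 < 1" using a by (simp add: field_simps)
      ultimately show ?thesis using ab by linarith
    qed
    then show ?thesis using a by (intro closed_segment_subset) (auto simp: convex_ball)
  qed
  have mem: "?I (linepath a b) \<in> ?S"
    using seg by (auto simp: path_image_linepath intro!: exI[of _ "linepath a b"])
  have bdd: "bdd_below ?S" using nn by (meson bdd_below.I)
  have ub: "?I (linepath a b) \<le> cmod (a - b) * 2 ^ m / (c * (1 - cmod a) ^ m)"
  proof (rule integral_le_const01)
    fix t :: real assume t: "t \<in> {0..1}"
    have lt: "linepath a b t = a + t *\<^sub>R (b - a)"
      by (simp add: linepath_def algebra_simps)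
    have "cmod (linepath a b t) \<le> cmod a + t * cmod (b - a)"
      unfolding lt using t by (metis abs_of_nonneg atLeastAtMost_iff norm_scaleR norm_triangle_ineq)
    also have "\<dots> \<le> cmod a + cmod (a - b)"
      using t by (simp add: norm_minus_commute mult_left_le_one_le)
    finally have n1: "cmod (linepath a b t) \<le> cmod a + cmod (a - b)" .
    have h: "(1 - cmod a) / 2 \<le> 1 - cmod (linepath a b t)" using n1 ab by argo
    have pos: "0 < (1 - cmod a) / 2" using a by simp
    have "c * ((1 - cmod a) / 2) ^ m \<le> c * (1 - cmod (linepath a b t)) ^ m"
      using h pos c by (intro mult_left_mono power_mono) auto
    also have "\<dots> \<le> \<tau> (cmod (linepath a b t))"
      using tau_lower h pos by auto
    finally have tl: "c * ((1 - cmod a) / 2) ^ m \<le> \<tau> (cmod (linepath a b t))" .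
    have p2: "0 < c * ((1 - cmod a) / 2) ^ m" using c pos by simp
    have "cmod (b - a) / \<tau> (cmod (linepath a b t)) \<le> cmod (b - a) / (c * ((1 - cmod a) / 2) ^ m)"
      using tl p2 by (intro divide_left_mono) auto
    also have "\<dots> = cmod (a - b) * 2 ^ m / (c * (1 - cmod a) ^ m)"
      by (simp add: norm_minus_commute power_divide)
    finally show "cmod (vector_derivative (linepath a b) (at t)) / \<tau> (cmod (linepath a b t))
        \<le> cmod (a - b) * 2 ^ m / (c * (1 - cmod a) ^ m)" by simp
  next
    show "0 \<le> cmod (a - b) * 2 ^ m / (c * (1 - cmod a) ^ m)" using c a by simp
  qed
  have "d_tau \<tau> a b \<le> ?I (linepath a b)"
    unfolding d_tau_def by (rule cInf_lower[OF mem bdd])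
  moreover have "0 \<le> d_tau \<tau> a b"
    unfolding d_tau_def using mem nn by (intro cInf_greatest) auto
  ultimately show ?thesis using ub by linarith
qed

lemma rho_tendsto_from_bound:
  fixes \<tau> :: "real \<Rightarrow> real" and \<phi> \<psi> :: "complex \<Rightarrow> complex"
  assumes c: "c > 0" and m: "m \<ge> 1" and tau_lower: "\<forall>r\<in>{0..<1}. \<tau> r \<ge> c * (1 - r) ^ m"
    and phi: "\<phi> ` ball 0 1 \<subseteq> ball 0 1"
    and key: "\<And>e. e > 0 \<Longrightarrow> \<exists>\<delta>>0. \<forall>z\<in>ball 0 1. z \<noteq> \<zeta> \<and> dist z \<zeta> < \<delta> \<longrightarrow>
                 cmod (\<phi> z - \<psi> z) \<le> e * (1 - cmod (\<phi> z)) ^ m"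
  shows "((\<lambda>z. rho_tau \<tau> (\<phi> z) (\<psi> z)) \<longlongrightarrow> 0) (at \<zeta> within ball 0 1)"
proof (rule tendstoI)
  fix \<epsilon> :: real assume eps: "\<epsilon> > 0"
  define e where "e = min (1/2) (\<epsilon> * c / 2 ^ (m + 1))"
  have e: "e > 0" using eps c by (simp add: e_def)
  obtain \<delta> where d: "\<delta> > 0" and hd: "\<forall>z\<in>ball 0 1. z \<noteq> \<zeta> \<and> dist z \<zeta> < \<delta> \<longrightarrow>
                 cmod (\<phi> z - \<psi> z) \<le> e * (1 - cmod (\<phi> z)) ^ m"
    using key[OF e] by blast
  show "\<forall>\<^sub>F z in at \<zeta> within ball 0 1. dist (rho_tau \<tau> (\<phi> z) (\<psi> z)) 0 < \<epsilon>"
    unfolding eventually_at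
  proof (intro exI[of _ \<delta>] conjI ballI impI)
    show "\<delta> > 0" by fact
    fix z assume z: "z \<in> ball 0 1" and zz: "z \<noteq> \<zeta> \<and> dist z \<zeta> < \<delta>"
    define a where "a = \<phi> z"
    define b where "b = \<psi> z"
    define u where "u = 1 - cmod a"
    have a1: "cmod a < 1" using phi z unfolding a_def by (auto simp: image_subset_iff)
    have u: "0 < u" "u \<le> 1" using a1 by (auto simp: u_def)
    have ab: "cmod (a - b) \<le> e * u ^ m" using hd z zz by (simp add: a_def b_def u_def)
    have um: "u ^ m \<le> u" using power_decreasing[of 1 m u] u m by simp
    have "e * u ^ m \<le> (1/2) * u" using e um u
      by (intro mult_mono) (auto simp: e_def)
    then have ab2: "cmod (a - b) \<le> (1 - cmod a) / 2" using ab by (simp add: u_def)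
    from d_tau_bounds[OF c tau_lower a1 ab2]
    have D: "0 \<le> d_tau \<tau> a b" "d_tau \<tau> a b \<le> cmod (a - b) * 2 ^ m / (c * u ^ m)"
      by (auto simp: u_def)
    have upos: "0 < c * u ^ m" using c u by simp
    have "cmod (a - b) * 2 ^ m / (c * u ^ m) \<le> e * u ^ m * 2 ^ m / (c * u ^ m)"
      using ab upos by (intro divide_right_mono mult_right_mono) auto
    also have "\<dots> = e * 2 ^ m / c" using u c by (simp add: field_simps)
    also have "\<dots> \<le> (\<epsilon> * c / 2 ^ (m + 1)) * 2 ^ m / c"
      using c by (intro divide_right_mono mult_right_mono) (auto simp: e_def)
    also have "\<dots> = \<epsilon> / 2" using c by (simp add: field_simps)
    finally have Dle: "d_tau \<tau> a b \<le> \<epsilon> / 2" using D by linarith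
    have r1: "rho_tau \<tau> a b \<le> d_tau \<tau> a b"
      unfolding rho_tau_def using exp_ge_add_one_self[of "- d_tau \<tau> a b"] by linarith
    have r0: "0 \<le> rho_tau \<tau> a b"
      unfolding rho_tau_def using D(1) by simp
    show "dist (rho_tau \<tau> (\<phi> z) (\<psi> z)) 0 < \<epsilon>"
      using r1 r0 Dle eps by (simp add: a_def b_def dist_real_def)
  qed
qed



lemma moebius_norm_identity:
  assumes w1: "norm w < 1" and z1: "norm z < 1"
  shows "1 - norm (Moebius_function 0 w z) ^ 2 =
         ((1 - norm w ^ 2) / (norm (1 - cnj w * z) ^ 2)) * (1 - norm z ^ 2)"
proof -
  have "1 - cnj w * z \<noteq> 0"
    by (metis complex_cnj_cnj complex_mod_sqrt_Re_mult_cnj mult.commute mult_less_cancel_right1 norm_ge_zero norm_mult norm_one order.asym right_minus_eq w1 z1)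
  then have VV: "1 - w * cnj z \<noteq> 0"
    by (metis complex_cnj_cnj complex_cnj_mult complex_cnj_one right_minus_eq)
  then show ?thesis
    apply (cases w)
    apply (cases z)
    apply (simp add: Moebius_function_def divide_simps norm_divide norm_mult)
    apply (simp add: complex_norm complex_diff complex_mult one_complex.code complex_cnj)
    apply (auto simp: algebra_simps power2_eq_square)
    done
qed

lemma schwarz_pick_lower:
  assumes hol: "f holomorphic_on ball 0 1" and img: "f ` ball 0 1 \<subseteq> ball 0 1"
  shows "\<exists>C>0. \<forall>z\<in>ball 0 1. C * (1 - cmod z) \<le> 1 - cmod (f z)"
proof -
  define a where "a = f 0"
  have a1: "cmod a < 1" using img by (auto simp: a_def image_subset_iff)
  define g where "g = Moebius_function 0 a \<circ> f"
  have gh: "g holomorphic_on ball 0 1"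
    unfolding g_def
    by (rule holomorphic_on_compose_gen[OF hol Moebius_function_holomorphic]) (use a1 img in auto)
  have fz1: "cmod (f z) < 1" if "cmod z < 1" for z using img that by (auto simp: image_subset_iff)
  have g0: "g 0 = 0" by (simp add: g_def a_def Moebius_function_eq_zero)
  have gno: "cmod (g z) < 1" if "cmod z < 1" for z
    unfolding g_def using Moebius_function_norm_lt_1 a1 fz1 that by simp
  have gle: "cmod (g z) \<le> cmod z" if "cmod z < 1" for z
    using Schwarz_Lemma(1)[OF gh g0 gno that] by blast
  define C where "C = (1 - cmod a) / 8"
  have C: "C > 0" using a1 by (simp add: C_def)
  show ?thesis
  proof (intro exI[of _ C] conjI C ballI)
    fix z :: complex assume "z \<in> ball 0 1"
    then have z1: "cmod z < 1" by simp
    define u where "u = g z"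
    have u1: "cmod u < 1" using gno z1 by (simp add: u_def)
    have uz: "cmod u \<le> cmod z" using gle z1 by (simp add: u_def)
    have fz: "f z = Moebius_function 0 (-a) u"
      unfolding u_def g_def using Moebius_function_compose[of "-a" a "f z"] a1 fz1[OF z1] by simp
    have id: "1 - cmod (f z) ^ 2 = ((1 - cmod a ^ 2) / (cmod (1 - cnj (-a) * u) ^ 2)) * (1 - cmod u ^ 2)"
      unfolding fz using moebius_norm_identity[of "-a" u] a1 u1 by simp
    have den: "cmod (1 - cnj (-a) * u) \<le> 2"
    proof -
      have "cmod (1 - cnj (-a) * u) \<le> 1 + cmod (cnj (-a) * u)" by (rule norm_triangle_ineq4[THEN order_trans]) simp
      also have "cmod (cnj (-a) * u) \<le> 1" using a1 u1 by (simp add: norm_mult mult_le_one)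
      finally show ?thesis by simp
    qed
    have denpos: "cmod (1 - cnj (-a) * u) > 0"
    proof -
      have "cmod (cnj (-a) * u) < 1" using norm_mult_less[of "cnj (-a)" 1 u 1] a1 u1 by simp
      then have "1 - cnj (-a) * u \<noteq> 0" by (metis norm_one right_minus_eq less_irrefl)
      then show ?thesis by simp
    qed
    have A: "1 - cmod a \<le> 1 - cmod a ^ 2" using a1 mult_left_le_one_le[of "cmod a" "cmod a"] by (simp add: power2_eq_square)
    have U: "1 - cmod z \<le> 1 - cmod u ^ 2"
    proof -
      have "cmod u * cmod u \<le> cmod u" using u1 mult_left_le_one_le[of "cmod u" "cmod u"] by simp
      then show ?thesis using uz by (simp add: power2_eq_square)
    qed
    have A0: "0 \<le> 1 - cmod a" using a1 by simp
    have Z0: "0 \<le> 1 - cmod z" using z1 by simp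
    have "(1 - cmod a) * (1 - cmod z) / 4 \<le> ((1 - cmod a ^ 2) / 4) * (1 - cmod u ^ 2)"
      using A U A0 Z0 by (simp add: mult_mono)
    also have "\<dots> \<le> ((1 - cmod a ^ 2) / (cmod (1 - cnj (-a) * u) ^ 2)) * (1 - cmod u ^ 2)"
    proof (intro mult_right_mono divide_left_mono)
      show "cmod (1 - cnj (-a) * u) ^ 2 \<le> 4" using den denpos
        by (metis power2_eq_square mult_mono norm_ge_zero num_double numeral_times_numeral order_refl
            mult_2_right numeral_Bit0 one_add_one power_mono four_x_squared power_one_right)
    qed (use a1 u1 denpos in \<open>auto simp: power_le_one abs_square_less_1\<close>)
    also have "\<dots> = 1 - cmod (f z) ^ 2" using id by simp
    also have "\<dots> \<le> 2 * (1 - cmod (f z))"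
    proof -
      have "1 - cmod (f z) ^ 2 = (1 - cmod (f z)) * (1 + cmod (f z))" by (simp add: algebra_simps power2_eq_square)
      also have "\<dots> \<le> (1 - cmod (f z)) * 2" using fz1[OF z1] by (intro mult_left_mono) auto
      finally show ?thesis by simp
    qed
    finally show "C * (1 - cmod z) \<le> 1 - cmod (f z)" by (simp add: C_def)
  qed
qed



lemma taylor_small:
  fixes D :: "nat \<Rightarrow> complex \<Rightarrow> complex"
  assumes N: "open N" "\<zeta> \<in> N" and zeta: "\<zeta> \<in> cball 0 1"
    and cont: "continuous_on (cball 0 1 \<inter> N) (D M)"
    and der: "\<forall>n<M. \<forall>z\<in>cball 0 1 \<inter> N. (D n has_field_derivative D (Suc n) z) (at z within cball 0 1 \<inter> N)"
    and zero: "\<forall>n\<le>M. D n \<zeta> = 0"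
    and e: "e > 0"
  shows "\<exists>\<delta>>0. \<forall>w\<in>cball 0 1. dist w \<zeta> < \<delta> \<longrightarrow> cmod (D 0 w) \<le> e * cmod (w - \<zeta>) ^ M"
proof -
  let ?S = "cball 0 1 \<inter> N"
  have zS: "\<zeta> \<in> ?S" using N zeta by simp
  obtain \<delta>1 where d1: "\<delta>1 > 0" and h1: "\<forall>x'\<in>?S. dist x' \<zeta> < \<delta>1 \<longrightarrow> dist (D M x') (D M \<zeta>) < e"
    using cont zS e unfolding continuous_on_iff by meson
  obtain \<delta>2 where d2: "\<delta>2 > 0" and h2: "ball \<zeta> \<delta>2 \<subseteq> N"
    using N open_contains_ball by blast
  define \<delta> where "\<delta> = min \<delta>1 \<delta>2"
  define K where "K = cball 0 1 \<inter> ball \<zeta> \<delta>"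
  have KS: "K \<subseteq> ?S" using h2 by (auto simp: K_def \<delta>_def)
  have zK: "\<zeta> \<in> K" using zeta d1 d2 by (simp add: K_def \<delta>_def)
  have claim: "\<forall>w\<in>K. cmod (D (M - j) w) \<le> e * cmod (w - \<zeta>) ^ j" if "j \<le> M" for j
    using that
  proof (induction j)
    case 0
    show ?case
    proof
      fix w assume w: "w \<in> K"
      then have "w \<in> ?S" "dist w \<zeta> < \<delta>1" using KS by (auto simp: K_def \<delta>_def dist_commute)
      then have "dist (D M w) (D M \<zeta>) < e" using h1 by blast
      then show "cmod (D (M - 0) w) \<le> e * cmod (w - \<zeta>) ^ 0" using zero by (simp add: dist_norm)
    qed
  next
    case (Suc j)
    then have IH: "\<forall>w\<in>K. cmod (D (M - j) w) \<le> e * cmod (w - \<zeta>) ^ j" by simp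
    define k where "k = M - Suc j"
    have kM: "k < M" and Sk: "Suc k = M - j" using Suc.prems by (auto simp: k_def)
    show ?case
    proof
      fix w assume w: "w \<in> K"
      define r where "r = cmod (w - \<zeta>)"
      define K' where "K' = K \<inter> cball \<zeta> r"
      have cvx: "convex K'" unfolding K'_def K_def
        by (intro convex_Int convex_cball convex_ball)
      have K'S: "K' \<subseteq> ?S" using KS by (auto simp: K'_def)
      have dK: "(D k has_field_derivative D (M - j) u) (at u within K')" if "u \<in> K'" for u
      proof -
        have "(D k has_field_derivative D (Suc k) u) (at u within ?S)"
          using der kM that K'S by blast
        then show ?thesis unfolding Sk using K'S by (rule has_field_derivative_subset)
      qed
      have bK: "cmod (D (M - j) u) \<le> e * r ^ j" if "u \<in> K'" for u
      proof -
        have "cmod (D (M - j) u) \<le> e * cmod (u - \<zeta>) ^ j" using IH that by (auto simp: K'_def)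
        also have "\<dots> \<le> e * r ^ j" using that e
          by (intro mult_left_mono power_mono) (auto simp: K'_def dist_norm norm_minus_commute)
        finally show ?thesis .
      qed
      have wK': "w \<in> K'" using w by (simp add: K'_def r_def dist_norm norm_minus_commute)
      have zK': "\<zeta> \<in> K'" using zK r_def by (simp add: K'_def)
      have "cmod (D k w - D k \<zeta>) \<le> e * r ^ j * cmod (w - \<zeta>)"
        by (rule field_differentiable_bound[OF cvx dK bK wK' zK'])
      moreover have "D k \<zeta> = 0" using zero kM by simp
      ultimately show "cmod (D (M - Suc j) w) \<le> e * cmod (w - \<zeta>) ^ Suc j"
        by (simp add: k_def r_def algebra_simps)
    qed
  qed
  show ?thesis
  proof (intro exI[of _ \<delta>] conjI ballI impI)
    show "\<delta> > 0" using d1 d2 by (simp add: \<delta>_def)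
    fix w assume "w \<in> cball 0 1" "dist w \<zeta> < \<delta>"
    then have "w \<in> K" by (simp add: K_def dist_commute)
    then show "cmod (D 0 w) \<le> e * cmod (w - \<zeta>) ^ M" using claim[of M] by simp
  qed
qed



lemma powr_pow_helper:
  fixes x :: real assumes "x > 0" "m \<ge> 1"
  shows "(x powr (real M / real m)) ^ m = x ^ M"
proof -
  have "(x powr (real M / real m)) ^ m = x powr (real m * (real M / real m))"
    using assms by (simp add: powr_power)
  also have "real m * (real M / real m) = real M" using assms by simp
  finally show ?thesis using assms by (simp add: powr_realpow)
qed

lemma deriv_lower_bound:
  fixes F :: "complex \<Rightarrow> complex"
  assumes d: "(F has_field_derivative F') (at \<zeta> within S)" and F': "F' \<noteq> 0"
  shows "\<exists>\<delta>>0. \<forall>y\<in>S. y \<noteq> \<zeta> \<and> dist y \<zeta> < \<delta> \<longrightarrow> cmod (F y - F \<zeta>) \<ge> (cmod F' / 2) * cmod (y - \<zeta>)"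
proof -
  have "((\<lambda>y. (F y - F \<zeta>) / (y - \<zeta>)) \<longlongrightarrow> F') (at \<zeta> within S)"
    using d by (simp add: has_field_derivative_iff)
  moreover have "cmod F' / 2 > 0" using F' by simp
  ultimately have "\<forall>\<^sub>F y in at \<zeta> within S. dist ((F y - F \<zeta>) / (y - \<zeta>)) F' < cmod F' / 2"
    by (rule tendstoD)
  then obtain \<delta> where \<delta>: "\<delta> > 0" and h: "\<forall>y\<in>S. y \<noteq> \<zeta> \<and> dist y \<zeta> < \<delta> \<longrightarrow>
      dist ((F y - F \<zeta>) / (y - \<zeta>)) F' < cmod F' / 2"
    unfolding eventually_at by blast
  show ?thesis
  proof (intro exI[of _ \<delta>] conjI \<delta> ballI impI)
    fix y assume y: "y \<in> S" "y \<noteq> \<zeta> \<and> dist y \<zeta> < \<delta>"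
    have "dist ((F y - F \<zeta>) / (y - \<zeta>)) F' < cmod F' / 2" using h y by blast
    then have "cmod F' - cmod ((F y - F \<zeta>) / (y - \<zeta>)) < cmod F' / 2"
      by (metis dist_commute dist_norm norm_triangle_ineq2 order_le_less_trans)
    then have "cmod F' / 2 \<le> cmod (F y - F \<zeta>) / cmod (y - \<zeta>)" by (simp add: norm_divide)
    moreover have "cmod (y - \<zeta>) > 0" using y by simp
    ultimately show "cmod (F y - F \<zeta>) \<ge> (cmod F' / 2) * cmod (y - \<zeta>)"
      by (simp add: field_simps)
  qed
qed

lemma deriv_nonzero:
  fixes F :: "complex \<Rightarrow> complex"
  assumes hol: "f holomorphic_on ball 0 1" and img: "f ` ball 0 1 \<subseteq> ball 0 1"
    and N: "open N" "\<zeta> \<in> N" and zeta: "cmod \<zeta> = 1"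
    and agree: "\<forall>z\<in>ball 0 1 \<inter> N. F z = f z"
    and d: "(F has_field_derivative F') (at \<zeta> within cball 0 1 \<inter> N)"
    and p: "cmod (F \<zeta>) \<ge> 1"
  shows "F' \<noteq> 0"
proof
  assume F0: "F' = 0"
  obtain C where C: "C > 0" and hC: "\<forall>z\<in>ball 0 1. C * (1 - cmod z) \<le> 1 - cmod (f z)"
    using schwarz_pick_lower[OF hol img] by blast
  have "((\<lambda>y. (F y - F \<zeta>) / (y - \<zeta>)) \<longlongrightarrow> 0) (at \<zeta> within cball 0 1 \<inter> N)"
    using d F0 by (simp add: has_field_derivative_iff)
  then have "\<forall>\<^sub>F y in at \<zeta> within cball 0 1 \<inter> N. dist ((F y - F \<zeta>) / (y - \<zeta>)) 0 < C"
    using C by (rule tendstoD)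
  then obtain d where dp: "d > 0" and h: "\<forall>y\<in>cball 0 1 \<inter> N. y \<noteq> \<zeta> \<and> dist y \<zeta> < d \<longrightarrow>
      dist ((F y - F \<zeta>) / (y - \<zeta>)) 0 < C"
    unfolding eventually_at by blast
  obtain d2 where d2: "d2 > 0" "ball \<zeta> d2 \<subseteq> N" using N open_contains_ball by blast
  define t where "t = min (min d d2) 1 / 2"
  have t: "0 < t" "t < d" "t < d2" "t < 1" using dp d2 by (auto simp: t_def)
  define y where "y = of_real (1 - t) * \<zeta>"
  have ny: "cmod y = 1 - t" unfolding y_def norm_mult norm_of_real using t zeta by simp
  have yz: "y - \<zeta> = - of_real t * \<zeta>" by (simp add: y_def algebra_simps)
  have dyz: "cmod (y - \<zeta>) = t" using t zeta by (simp add: yz norm_mult)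
  have yb: "y \<in> ball 0 1" using ny t by simp
  have yN: "y \<in> N" using d2 dyz t by (auto simp: dist_norm norm_minus_commute)
  have yne: "y \<noteq> \<zeta>" using dyz t by auto
  have "dist ((F y - F \<zeta>) / (y - \<zeta>)) 0 < C"
    using h yb yN yne dyz t by (auto simp: dist_norm)
  then have lt: "cmod (F y - F \<zeta>) < C * t" using dyz t by (simp add: norm_divide field_simps)
  have "C * t \<le> 1 - cmod (f y)" using hC[rule_format, OF yb] ny by simp
  also have "\<dots> \<le> cmod (F \<zeta>) - cmod (F y)" using agree yb yN p by simp
  also have "\<dots> \<le> cmod (F y - F \<zeta>)" by (metis norm_minus_commute norm_triangle_ineq2)
  finally show False using lt by simp
qed

theorem proposition4p1:
  fixes \<eta> :: "complex \<Rightarrow> real" and \<tau> :: "real \<Rightarrow> real"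
    and m M :: nat and c :: real
    and \<phi> \<psi> :: "complex \<Rightarrow> complex" and \<zeta> :: complex
  assumes W: "in_W \<eta> \<tau>"
    and m: "m \<ge> 1" and c: "c > 0"
    and tau_lower: "\<forall>r\<in>{0..<1}. \<tau> r \<ge> c * (1 - r) ^ m"
    and hphi: "\<phi> holomorphic_on ball 0 1" "\<phi> ` ball 0 1 \<subseteq> ball 0 1"
    and hpsi: "\<psi> holomorphic_on ball 0 1" "\<psi> ` ball 0 1 \<subseteq> ball 0 1"
    and zeta: "cmod \<zeta> = 1"
    and M: "M \<ge> 1"
    and ext: "\<exists>N \<Phi> \<Psi>. open N \<and> \<zeta> \<in> N \<and> CM_ext M N \<phi> \<Phi> \<and> CM_ext M N \<psi> \<Psi> \<and>
               (\<forall>n\<le>M. \<Phi> n \<zeta> = \<Psi> n \<zeta>) \<and>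
               (\<exists>c' N'. c' > 0 \<and> open N' \<and> \<zeta> \<in> N' \<and>
                  (\<forall>z\<in>ball 0 1 \<inter> N'.
                     1 - cmod (\<phi> z) \<ge> c' * cmod (\<phi> z - \<Phi> 0 \<zeta>) powr (real M / real m)))"
  shows "((\<lambda>z. rho_tau \<tau> (\<phi> z) (\<psi> z)) \<longlongrightarrow> 0) (at \<zeta> within ball 0 1)"
proof -
  obtain N \<Phi> \<Psi> c' N' where N: "open N" "\<zeta> \<in> N" and CP: "CM_ext M N \<phi> \<Phi>" and CQ: "CM_ext M N \<psi> \<Psi>"
    and eqz: "\<forall>n\<le>M. \<Phi> n \<zeta> = \<Psi> n \<zeta>" and c': "c' > 0" and N': "open N'" "\<zeta> \<in> N'"
    and contact: "\<forall>z\<in>ball 0 1 \<inter> N'. 1 - cmod (\<phi> z) \<ge> c' * cmod (\<phi> z - \<Phi> 0 \<zeta>) powr (real M / real m)"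
    using ext by blast
  let ?S = "cball 0 1 \<inter> N"
  define p where "p = \<Phi> 0 \<zeta>"
  have P0: "\<forall>z\<in>ball 0 1 \<inter> N. \<Phi> 0 z = \<phi> z" using CP by (simp add: CM_ext_def)
  have Q0: "\<forall>z\<in>ball 0 1 \<inter> N. \<Psi> 0 z = \<psi> z" using CQ by (simp add: CM_ext_def)
  have Pc: "\<forall>n\<le>M. continuous_on ?S (\<Phi> n)" using CP by (simp add: CM_ext_def)
  have Qc: "\<forall>n\<le>M. continuous_on ?S (\<Psi> n)" using CQ by (simp add: CM_ext_def)
  have Pd: "\<forall>n<M. \<forall>z\<in>?S. (\<Phi> n has_field_derivative \<Phi> (Suc n) z) (at z within ?S)"
    using CP by (simp add: CM_ext_def)
  have Qd: "\<forall>n<M. \<forall>z\<in>?S. (\<Psi> n has_field_derivative \<Psi> (Suc n) z) (at z within ?S)"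
    using CQ by (simp add: CM_ext_def)
  define D where "D = (\<lambda>n z. \<Phi> n z - \<Psi> n z)"
  have zS: "\<zeta> \<in> ?S" using N zeta by simp
  have taylor: "\<exists>\<delta>>0. \<forall>w\<in>cball 0 1. dist w \<zeta> < \<delta> \<longrightarrow> cmod (D 0 w) \<le> e * cmod (w - \<zeta>) ^ M"
    if e: "e > 0" for e
  proof (rule taylor_small[OF N _ _ _ _ e])
    show "\<zeta> \<in> cball 0 1" using zeta by simp
    show "continuous_on ?S (D M)" unfolding D_def using Pc Qc by (intro continuous_on_diff) auto
    show "\<forall>n<M. \<forall>z\<in>?S. (D n has_field_derivative D (Suc n) z) (at z within ?S)"
      unfolding D_def using Pd Qd by (auto intro!: DERIV_diff)
    show "\<forall>n\<le>M. D n \<zeta> = 0" using eqz by (simp add: D_def)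
  qed
  obtain dN where dN: "dN > 0" "ball \<zeta> dN \<subseteq> N" using N open_contains_ball by blast
  have diffD: "\<phi> z - \<psi> z = D 0 z" if "z \<in> ball 0 1" "dist z \<zeta> < dN" for z
    using that dN P0 Q0 by (auto simp: D_def dist_commute)
  have key: "\<exists>\<delta>>0. \<forall>z\<in>ball 0 1. z \<noteq> \<zeta> \<and> dist z \<zeta> < \<delta> \<longrightarrow>
                 cmod (\<phi> z - \<psi> z) \<le> e * (1 - cmod (\<phi> z)) ^ m" if e: "e > 0" for e
  proof (cases "cmod p < 1")
    case True
    define q where "q = (1 - cmod p) / 2"
    have q: "q > 0" using True by (simp add: q_def)
    obtain d3 where d3: "d3 > 0" and h3: "\<forall>x\<in>?S. dist x \<zeta> < d3 \<longrightarrow> dist (\<Phi> 0 x) (\<Phi> 0 \<zeta>) < q"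
      using Pc zS q unfolding continuous_on_iff by (meson le0)
    have eq: "e * q ^ m > 0" using e q by simp
    obtain dT where dT: "dT > 0" and hT: "\<forall>w\<in>cball 0 1. dist w \<zeta> < dT \<longrightarrow> cmod (D 0 w) \<le> e * q ^ m * cmod (w - \<zeta>) ^ M"
      using taylor[OF eq] by blast
    show ?thesis
    proof (intro exI[of _ "min (min dN d3) (min dT 1)"] conjI ballI impI)
      show "min (min dN d3) (min dT 1) > 0" using dN d3 dT by simp
      fix z assume z: "z \<in> ball 0 1" and zz: "z \<noteq> \<zeta> \<and> dist z \<zeta> < min (min dN d3) (min dT 1)"
      have zN: "z \<in> N" using dN zz by (auto simp: dist_commute)
      have "dist (\<phi> z) p < q" using h3 z zN zz P0 by (auto simp: p_def)
      then have "cmod (\<phi> z) < cmod p + q" by (metis dist_norm norm_triangle_sub add.commute order_le_less_trans add_less_cancel_left norm_minus_commute)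
      then have fq: "q \<le> 1 - cmod (\<phi> z)" by (simp add: q_def field_simps)
      have "cmod (\<phi> z - \<psi> z) = cmod (D 0 z)" using diffD z zz by simp
      also have "\<dots> \<le> e * q ^ m * cmod (z - \<zeta>) ^ M" using hT z zz by auto
      also have "\<dots> \<le> e * q ^ m * 1"
      proof -
        have "cmod (z - \<zeta>) \<le> 1" using zz by (simp add: dist_norm)
        then have "cmod (z - \<zeta>) ^ M \<le> 1" by (simp add: power_le_one)
        then show ?thesis using eq by (intro mult_left_mono) auto
      qed
      also have "\<dots> \<le> e * (1 - cmod (\<phi> z)) ^ m"
        using fq q e by (simp add: power_mono)
      finally show "cmod (\<phi> z - \<psi> z) \<le> e * (1 - cmod (\<phi> z)) ^ m" .
    qed
  next
    case False
    then have p1: "cmod (\<Phi> 0 \<zeta>) \<ge> 1" by (simp add: p_def)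
    have d1: "(\<Phi> 0 has_field_derivative \<Phi> 1 \<zeta>) (at \<zeta> within ?S)"
      using Pd zS M by auto
    have nz: "\<Phi> 1 \<zeta> \<noteq> 0"
      by (rule deriv_nonzero[OF hphi N zeta _ d1 p1]) (use P0 in auto)
    define k where "k = cmod (\<Phi> 1 \<zeta>) / 2"
    have k: "k > 0" using nz by (simp add: k_def)
    obtain dk where dk: "dk > 0" and hk: "\<forall>y\<in>?S. y \<noteq> \<zeta> \<and> dist y \<zeta> < dk \<longrightarrow> cmod (\<Phi> 0 y - \<Phi> 0 \<zeta>) \<ge> k * cmod (y - \<zeta>)"
      using deriv_lower_bound[OF d1 nz] unfolding k_def by blast
    obtain dN' where dN': "dN' > 0" "ball \<zeta> dN' \<subseteq> N'" using N' open_contains_ball by blast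
    define E where "E = e * c' ^ m * k ^ M"
    have E: "E > 0" using e c' k by (simp add: E_def)
    obtain dT where dT: "dT > 0" and hT: "\<forall>w\<in>cball 0 1. dist w \<zeta> < dT \<longrightarrow> cmod (D 0 w) \<le> E * cmod (w - \<zeta>) ^ M"
      using taylor[OF E] by blast
    show ?thesis
    proof (intro exI[of _ "min (min dN dN') (min dT dk)"] conjI ballI impI)
      show "min (min dN dN') (min dT dk) > 0" using dN dN' dk dT by simp
      fix z assume z: "z \<in> ball 0 1" and zz: "z \<noteq> \<zeta> \<and> dist z \<zeta> < min (min dN dN') (min dT dk)"
      have zN: "z \<in> N" using dN zz by (auto simp: dist_commute)
      have zN': "z \<in> N'" using dN' zz by (auto simp: dist_commute)
      have low: "k * cmod (z - \<zeta>) \<le> cmod (\<phi> z - p)"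
        using hk z zN zz P0 by (auto simp: p_def)
      have kz: "0 < k * cmod (z - \<zeta>)" using k zz by simp
      have "c' * (k * cmod (z - \<zeta>)) powr (real M / real m) \<le> c' * cmod (\<phi> z - p) powr (real M / real m)"
        using low kz c' by (intro mult_left_mono powr_mono2) auto
      also have "\<dots> \<le> 1 - cmod (\<phi> z)" using contact z zN' by (auto simp: p_def)
      finally have cl: "c' * (k * cmod (z - \<zeta>)) powr (real M / real m) \<le> 1 - cmod (\<phi> z)" .
      have "(c' * (k * cmod (z - \<zeta>)) powr (real M / real m)) ^ m = c' ^ m * (k * cmod (z - \<zeta>)) ^ M"
        using powr_pow_helper[OF kz m] by (simp add: power_mult_distrib)
      moreover have "(c' * (k * cmod (z - \<zeta>)) powr (real M / real m)) ^ m \<le> (1 - cmod (\<phi> z)) ^ m"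
        using cl c' kz by (intro power_mono) auto
      ultimately have pw: "c' ^ m * (k * cmod (z - \<zeta>)) ^ M \<le> (1 - cmod (\<phi> z)) ^ m" by simp
      have "cmod (\<phi> z - \<psi> z) = cmod (D 0 z)" using diffD z zz by simp
      also have "\<dots> \<le> E * cmod (z - \<zeta>) ^ M" using hT z zz by auto
      also have "\<dots> = e * (c' ^ m * (k * cmod (z - \<zeta>)) ^ M)" by (simp add: E_def power_mult_distrib)
      also have "\<dots> \<le> e * (1 - cmod (\<phi> z)) ^ m" using pw e by simp
      finally show "cmod (\<phi> z - \<psi> z) \<le> e * (1 - cmod (\<phi> z)) ^ m" .
    qed
  qed
  show ?thesis
    by (rule rho_tendsto_from_bound[OF c m tau_lower hphi(2)]) (use key in blast)
qed

end
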